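(* Let $f\in\mathcal{F}\{y_0,\ldots,y_n\}$ be a nonzero differentially homogeneous differential polynomial of degree $m$, not lying in $\mathcal{F}$, and let $\mathscr{R}$ be any ranking of $y_0,\ldots,y_n$. Then both the initial and the separant of $f$ with respect to $\mathscr{R}$ are differentially homogeneous.
   Context: $\mathcal{F}$ is an ordinary differential field with derivation $\delta$; $\mathcal{F}\{y_0,\ldots,y_n\}$ is the differential polynomial ring in the differential indeterminates $y_0,\ldots,y_n$; $y_j^{(k)}$ denotes the $k$-th derivative. A differential polynomial $f$ is differentially homogeneous of degree $m$ if, for a new differential indeterminate $t$, $f(ty_0,\ldots,ty_n)=t^m f(y_0,\ldots,y_n)$ in $\mathcal{F}\{t,y_0,\ldots,y_n\}$. For a ranking $\mathscr{R}$ (a total order on all derivatives $y_j^{(k)}$ compatible with differentiation), the leader of $f\notin\mathcal{F}$ is the highest-ranked derivative $y_i^{(o)}$ occurring in $f$; writing $f=I_f\,(y_i^{(o)})^l+\cdots$ as a polynomial in the leader, $I_f$ is the initial and $\partial f/\partial y_i^{(o)}$ is the separant. *)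

theory Defs
  imports "HOL-Library.Poly_Mapping"
begin

text \<open>Derivatives of differential indeterminates: T k is t^(k), Y j k is y_j^(k).\<close>
datatype dvar = T nat | Y nat nat

fun dsucc :: "dvar \<Rightarrow> dvar" where
  "dsucc (T k) = T (Suc k)"
| "dsucc (Y j k) = Y j (Suc k)"

type_synonym 'a dpoly = "(dvar \<Rightarrow>\<^sub>0 nat) \<Rightarrow>\<^sub>0 'a"

definition is_derivation :: "('a::field \<Rightarrow> 'a) \<Rightarrow> bool" where
  "is_derivation \<delta> \<longleftrightarrow> (\<forall>a b. \<delta> (a + b) = \<delta> a + \<delta> b) \<and> (\<forall>a b. \<delta> (a * b) = a * \<delta> b + \<delta> a * b)"

definition dconst :: "'a::comm_ring_1 \<Rightarrow> 'a dpoly" where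
  "dconst c = Poly_Mapping.single 0 c"

definition dX :: "dvar \<Rightarrow> 'a::comm_ring_1 dpoly" where
  "dX v = Poly_Mapping.single (Poly_Mapping.single v 1) 1"

definition dvars :: "'a::comm_ring_1 dpoly \<Rightarrow> dvar set" where
  "dvars p = (\<Union>M\<in>Poly_Mapping.keys p. Poly_Mapping.keys (M :: dvar \<Rightarrow>\<^sub>0 nat))"

definition in_Fy :: "nat \<Rightarrow> 'a::comm_ring_1 dpoly \<Rightarrow> bool" where
  "in_Fy n p \<longleftrightarrow> (\<forall>v\<in>dvars p. \<exists>j k. v = Y j k \<and> j \<le> n)"

text \<open>The derivation of F{t,y_0,...,y_n} extending \<delta>, with y^(k) mapped to y^(k+1).\<close>
definition dshift :: "dvar \<Rightarrow> (dvar \<Rightarrow>\<^sub>0 nat) \<Rightarrow> (dvar \<Rightarrow>\<^sub>0 nat)" where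
  "dshift v M = M - Poly_Mapping.single v 1 + Poly_Mapping.single (dsucc v) 1"

definition dderiv_mono :: "('a::comm_ring_1 \<Rightarrow> 'a) \<Rightarrow> (dvar \<Rightarrow>\<^sub>0 nat) \<Rightarrow> 'a \<Rightarrow> 'a dpoly" where
  "dderiv_mono \<delta> M c = Poly_Mapping.single M (\<delta> c)
      + (\<Sum>v\<in>Poly_Mapping.keys M. Poly_Mapping.single (dshift v M) (of_nat (Poly_Mapping.lookup M v) * c))"

definition dderiv :: "('a::comm_ring_1 \<Rightarrow> 'a) \<Rightarrow> 'a dpoly \<Rightarrow> 'a dpoly" where
  "dderiv \<delta> p = (\<Sum>M\<in>Poly_Mapping.keys p. dderiv_mono \<delta> M (Poly_Mapping.lookup p M))"

definition dsubst :: "(dvar \<Rightarrow> 'a::comm_ring_1 dpoly) \<Rightarrow> 'a dpoly \<Rightarrow> 'a dpoly" where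
  "dsubst \<sigma> p = (\<Sum>M\<in>Poly_Mapping.keys p. dconst (Poly_Mapping.lookup p M) * (\<Prod>v\<in>Poly_Mapping.keys M. \<sigma> v ^ Poly_Mapping.lookup M v))"

text \<open>The substitution y_j \<mapsto> t y_j, i.e. y_j^(k) \<mapsto> \<delta>^k (t y_j).\<close>
fun tsubst :: "('a::comm_ring_1 \<Rightarrow> 'a) \<Rightarrow> dvar \<Rightarrow> 'a dpoly" where
  "tsubst \<delta> (Y j k) = (dderiv \<delta> ^^ k) (dX (T 0) * dX (Y j 0))"
| "tsubst \<delta> (T k) = dX (T k)"

definition diff_homogeneous :: "('a::comm_ring_1 \<Rightarrow> 'a) \<Rightarrow> 'a dpoly \<Rightarrow> nat \<Rightarrow> bool" where
  "diff_homogeneous \<delta> f m \<longleftrightarrow> dsubst (tsubst \<delta>) f = dX (T 0) ^ m * f"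

text \<open>A ranking of y_0..y_n, given as strict order r (r u v means u ranks lower than v).\<close>
definition is_ranking :: "nat \<Rightarrow> (dvar \<Rightarrow> dvar \<Rightarrow> bool) \<Rightarrow> bool" where
  "is_ranking n r \<longleftrightarrow>
    (let D = {Y j k | j k. j \<le> n} in
     (\<forall>u\<in>D. \<not> r u u) \<and>
     (\<forall>u\<in>D. \<forall>v\<in>D. \<forall>w\<in>D. r u v \<longrightarrow> r v w \<longrightarrow> r u w) \<and>
     (\<forall>u\<in>D. \<forall>v\<in>D. u \<noteq> v \<longrightarrow> r u v \<or> r v u) \<and>
     (\<forall>u\<in>D. r u (dsucc u)) \<and>
     (\<forall>u\<in>D. \<forall>v\<in>D. r u v \<longrightarrow> r (dsucc u) (dsucc v)))"

definition leader :: "(dvar \<Rightarrow> dvar \<Rightarrow> bool) \<Rightarrow> 'a::comm_ring_1 dpoly \<Rightarrow> dvar" where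
  "leader r p = (THE u. u \<in> dvars p \<and> (\<forall>v\<in>dvars p. v \<noteq> u \<longrightarrow> r v u))"

definition var_degree :: "dvar \<Rightarrow> 'a::comm_ring_1 dpoly \<Rightarrow> nat" where
  "var_degree u p = Max ((\<lambda>M. Poly_Mapping.lookup M u) ` Poly_Mapping.keys p)"

definition lead_coeff_in :: "dvar \<Rightarrow> 'a::comm_ring_1 dpoly \<Rightarrow> 'a dpoly" where
  "lead_coeff_in u p = (let l = var_degree u p in
     (\<Sum>M\<in>{M\<in>Poly_Mapping.keys p. Poly_Mapping.lookup M u = l}. Poly_Mapping.single (M - Poly_Mapping.single u l) (Poly_Mapping.lookup p M)))"

definition partial_diff :: "dvar \<Rightarrow> 'a::comm_ring_1 dpoly \<Rightarrow> 'a dpoly" where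
  "partial_diff u p = (\<Sum>M\<in>Poly_Mapping.keys p. Poly_Mapping.single (M - Poly_Mapping.single u 1) (of_nat (Poly_Mapping.lookup M u) * Poly_Mapping.lookup p M))"

definition initial :: "(dvar \<Rightarrow> dvar \<Rightarrow> bool) \<Rightarrow> 'a::comm_ring_1 dpoly \<Rightarrow> 'a dpoly" where
  "initial r p = lead_coeff_in (leader r p) p"

definition separant :: "(dvar \<Rightarrow> dvar \<Rightarrow> bool) \<Rightarrow> 'a::comm_ring_1 dpoly \<Rightarrow> 'a dpoly" where
  "separant r p = partial_diff (leader r p) p"

end

theory Submission
  imports Defs
begin

lemma pm_expand: "p = (\<Sum>M\<in>Poly_Mapping.keys p. Poly_Mapping.single M (Poly_Mapping.lookup p M))"
proof (rule poly_mapping_eqI)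
  fix k
  show "Poly_Mapping.lookup p k = Poly_Mapping.lookup (\<Sum>M\<in>Poly_Mapping.keys p. Poly_Mapping.single M (Poly_Mapping.lookup p M)) k"
    by (simp add: lookup_sum lookup_single when_def in_keys_iff)
qed

lemma lookup_single_mult: 
  fixes q :: "('b::cancel_comm_monoid_add) \<Rightarrow>\<^sub>0 ('a::comm_semiring_1)"
  shows "Poly_Mapping.lookup (Poly_Mapping.single K a * q) (K + N) = a * Poly_Mapping.lookup q N"
proof -
  have "Poly_Mapping.single K a * q = (\<Sum>M\<in>Poly_Mapping.keys q. Poly_Mapping.single (K + M) (a * Poly_Mapping.lookup q M))"
    by (subst pm_expand[of q]) (simp add: sum_distrib_left mult_single)
  then show ?thesis
    by (simp add: lookup_sum lookup_single when_def in_keys_iff)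
qed

lemma lookup_single_mult0:
  fixes q :: "('b::cancel_comm_monoid_add) \<Rightarrow>\<^sub>0 ('a::comm_semiring_1)"
  assumes "\<not> (\<exists>N. M = K + N)"
  shows "Poly_Mapping.lookup (Poly_Mapping.single K a * q) M = 0"
proof -
  have "M \<notin> Poly_Mapping.keys (Poly_Mapping.single K a * q)"
    using keys_mult[of "Poly_Mapping.single K a" q] assms
    by (auto split: if_splits)
  then show ?thesis by (simp add: in_keys_iff)
qed


definition mon :: "(dvar \<Rightarrow> 'a::comm_ring_1 dpoly) \<Rightarrow> (dvar \<Rightarrow>\<^sub>0 nat) \<Rightarrow> 'a dpoly" where
  "mon \<sigma> M = (\<Prod>v\<in>Poly_Mapping.keys M. \<sigma> v ^ Poly_Mapping.lookup M v)"

lemma dconst_0[simp]: "dconst 0 = 0" by (simp add: dconst_def)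
lemma dconst_add: "dconst (a + b) = dconst a + dconst b" by (simp add: dconst_def single_add)
lemma dconst_mult: "dconst (a * b) = dconst a * dconst b" by (simp add: dconst_def mult_single)
lemma dconst_1[simp]: "dconst 1 = 1" by (simp add: dconst_def)
lemma dconst_single: "dconst a * Poly_Mapping.single M b = Poly_Mapping.single M (a * b)"
  by (simp add: dconst_def mult_single)

lemma dsubst_superset:
  assumes "finite K" "Poly_Mapping.keys p \<subseteq> K"
  shows "dsubst \<sigma> p = (\<Sum>M\<in>K. dconst (Poly_Mapping.lookup p M) * mon \<sigma> M)"
  unfolding dsubst_def mon_def
  by (rule sum.mono_neutral_left) (use assms in \<open>auto simp: in_keys_iff\<close>)

lemma dsubst_zero[simp]: "dsubst \<sigma> 0 = 0" by (simp add: dsubst_def)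

lemma dsubst_add: "dsubst \<sigma> (p + q) = dsubst \<sigma> p + dsubst \<sigma> q"
proof -
  let ?K = "Poly_Mapping.keys p \<union> Poly_Mapping.keys q"
  have "dsubst \<sigma> (p + q) = (\<Sum>M\<in>?K. dconst (Poly_Mapping.lookup (p+q) M) * mon \<sigma> M)"
    by (rule dsubst_superset) (auto dest: subsetD[OF keys_add])
  also have "\<dots> = (\<Sum>M\<in>?K. dconst (Poly_Mapping.lookup p M) * mon \<sigma> M) + (\<Sum>M\<in>?K. dconst (Poly_Mapping.lookup q M) * mon \<sigma> M)"
    by (simp add: lookup_add dconst_add distrib_right sum.distrib)
  also have "\<dots> = dsubst \<sigma> p + dsubst \<sigma> q"
    by (simp add: dsubst_superset[symmetric])
  finally show ?thesis .
qed

lemma dsubst_sum: "dsubst \<sigma> (\<Sum>i\<in>I. g i) = (\<Sum>i\<in>I. dsubst \<sigma> (g i))"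
  by (induction I rule: infinite_finite_induct) (auto simp: dsubst_add)

lemma dsubst_single: "dsubst \<sigma> (Poly_Mapping.single M c) = dconst c * mon \<sigma> M"
  by (subst dsubst_superset[where K="{M}"]) auto

lemma mon_superset:
  assumes "finite K" "Poly_Mapping.keys M \<subseteq> K"
  shows "mon \<sigma> M = (\<Prod>v\<in>K. \<sigma> v ^ Poly_Mapping.lookup M v)"
  unfolding mon_def
  by (rule prod.mono_neutral_left) (use assms in \<open>auto simp: in_keys_iff\<close>)

lemma mon_add: "mon \<sigma> (M + N) = mon \<sigma> M * mon \<sigma> N"
proof -
  let ?K = "Poly_Mapping.keys M \<union> Poly_Mapping.keys N"
  have "mon \<sigma> (M + N) = (\<Prod>v\<in>?K. \<sigma> v ^ Poly_Mapping.lookup (M + N) v)"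
    by (rule mon_superset) (auto dest: subsetD[OF keys_add])
  also have "\<dots> = (\<Prod>v\<in>?K. \<sigma> v ^ Poly_Mapping.lookup M v) * (\<Prod>v\<in>?K. \<sigma> v ^ Poly_Mapping.lookup N v)"
    by (simp add: lookup_add power_add prod.distrib)
  also have "\<dots> = mon \<sigma> M * mon \<sigma> N"
    by (simp add: mon_superset[symmetric])
  finally show ?thesis .
qed

lemma mon_zero[simp]: "mon \<sigma> 0 = 1" by (simp add: mon_def)

lemma dsubst_single_mult:
  "dsubst \<sigma> (Poly_Mapping.single M a * Poly_Mapping.single N b) = dsubst \<sigma> (Poly_Mapping.single M a) * dsubst \<sigma> (Poly_Mapping.single N b)"
  by (simp add: mult_single dsubst_single mon_add dconst_mult ac_simps)

lemma dsubst_mult: "dsubst \<sigma> (p * q) = dsubst \<sigma> p * dsubst \<sigma> q"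
proof -
  have "p * q = (\<Sum>M\<in>Poly_Mapping.keys p. \<Sum>N\<in>Poly_Mapping.keys q. Poly_Mapping.single M (Poly_Mapping.lookup p M) * Poly_Mapping.single N (Poly_Mapping.lookup q N))"
    by (subst pm_expand[of p], subst pm_expand[of q]) (simp add: sum_distrib_left sum_distrib_right sum.swap[of _ "Poly_Mapping.keys q"])
  then have "dsubst \<sigma> (p * q) = (\<Sum>M\<in>Poly_Mapping.keys p. \<Sum>N\<in>Poly_Mapping.keys q. dsubst \<sigma> (Poly_Mapping.single M (Poly_Mapping.lookup p M)) * dsubst \<sigma> (Poly_Mapping.single N (Poly_Mapping.lookup q N)))"
    by (simp add: dsubst_sum dsubst_single_mult)
  also have "\<dots> = dsubst \<sigma> p * dsubst \<sigma> q"
    by (subst (3) pm_expand[of p], subst (3) pm_expand[of q]) (simp add: dsubst_sum sum_distrib_left sum_distrib_right sum.swap[of _ "Poly_Mapping.keys q"])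
  finally show ?thesis .
qed

lemma dsubst_one[simp]: "dsubst \<sigma> 1 = 1"
  by (metis dconst_1 dconst_def dsubst_single mon_zero mult_1)

lemma dsubst_power: "dsubst \<sigma> (p ^ k) = dsubst \<sigma> p ^ k"
  by (induction k) (auto simp: dsubst_mult)

lemma dsubst_dX[simp]: "dsubst \<sigma> (dX v) = \<sigma> v"
  by (simp add: dX_def dsubst_single mon_def)

lemma dX_power: "(dX v :: 'a::comm_ring_1 dpoly) ^ k = Poly_Mapping.single (Poly_Mapping.single v k) 1"
  by (induction k) (auto simp: dX_def mult_single single_add[symmetric] add.commute)


definition dle :: "dvar \<Rightarrow> nat \<Rightarrow> 'a::comm_ring_1 dpoly \<Rightarrow> bool" where
  "dle u k p \<longleftrightarrow> (\<forall>M\<in>Poly_Mapping.keys p. Poly_Mapping.lookup M u \<le> k)"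

lemma dle_zero[simp]: "dle u k 0" by (simp add: dle_def)
lemma dle_add: "dle u k p \<Longrightarrow> dle u k q \<Longrightarrow> dle u k (p + q)"
  unfolding dle_def using keys_add[of p q] by blast
lemma dle_uminus: "dle u k p \<Longrightarrow> dle u k (- p)"
  unfolding dle_def by (simp add: in_keys_iff)
lemma dle_diff: "dle u k p \<Longrightarrow> dle u k q \<Longrightarrow> dle u k (p - q)"
  using dle_add[OF _ dle_uminus] by (metis diff_conv_add_uminus)
lemma dle_sum: "(\<And>i. i \<in> I \<Longrightarrow> dle u k (g i)) \<Longrightarrow> dle u k (\<Sum>i\<in>I. g i)"
  by (induction I rule: infinite_finite_induct) (auto intro: dle_add)
lemma dle_mono: "dle u k p \<Longrightarrow> k \<le> k' \<Longrightarrow> dle u k' p"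
  unfolding dle_def by fastforce
lemma dle_mult: assumes "dle u a p" "dle u b q" shows "dle u (a + b) (p * q)"
  unfolding dle_def
proof
  fix M assume "M \<in> Poly_Mapping.keys (p * q)"
  then obtain x y where "M = x + y" "x \<in> Poly_Mapping.keys p" "y \<in> Poly_Mapping.keys q"
    using keys_mult[of p q] by blast
  then show "Poly_Mapping.lookup M u \<le> a + b"
    using assms unfolding dle_def by (simp add: lookup_add add_mono)
qed
lemma dle_one[simp]: "dle u 0 1" by (simp add: dle_def)
lemma dle_prod: "(\<And>i. i \<in> I \<Longrightarrow> dle u (e i) (g i)) \<Longrightarrow> dle u (\<Sum>i\<in>I. e i) (\<Prod>i\<in>I. g i)"
  by (induction I rule: infinite_finite_induct) (auto intro: dle_mult)
lemma dle_power: "dle u a p \<Longrightarrow> dle u (a * k) (p ^ k)"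
  by (induction k) (auto simp: dle_mult)
lemma dle_single: "dle u (Poly_Mapping.lookup M u) (Poly_Mapping.single M c)"
  by (simp add: dle_def)
lemma dle_dconst[simp]: "dle u 0 (dconst c)" by (simp add: dle_def dconst_def)
lemma dle_novar: "u \<notin> dvars p \<Longrightarrow> dle u 0 p"
  by (auto simp: dle_def dvars_def in_keys_iff)

lemma dle_dsubst:
  assumes "\<And>v. v \<in> dvars p \<Longrightarrow> v \<noteq> u \<Longrightarrow> dle u 0 (\<sigma> v)"
    and "dle u 1 (\<sigma> u)" and "dle u k p"
  shows "dle u k (dsubst \<sigma> p)"
  unfolding dsubst_def
proof (rule dle_sum)
  fix M assume M: "M \<in> Poly_Mapping.keys p"
  let ?e = "\<lambda>v. if v = u then Poly_Mapping.lookup M v else 0"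
  have "dle u (\<Sum>v\<in>Poly_Mapping.keys M. ?e v) (\<Prod>v\<in>Poly_Mapping.keys M. \<sigma> v ^ Poly_Mapping.lookup M v)"
  proof (rule dle_prod)
    fix v assume v: "v \<in> Poly_Mapping.keys M"
    show "dle u (?e v) (\<sigma> v ^ Poly_Mapping.lookup M v)"
    proof (cases "v = u")
      case True
      then show ?thesis using dle_power[OF assms(2), of "Poly_Mapping.lookup M v"] by simp
    next
      case False
      have "v \<in> dvars p" using M v by (auto simp: dvars_def)
      then show ?thesis using dle_power[OF assms(1), of v "Poly_Mapping.lookup M v"] False by simp
    qed
  qed
  moreover have "(\<Sum>v\<in>Poly_Mapping.keys M. ?e v) \<le> k"
  proof -
    have "(\<Sum>v\<in>Poly_Mapping.keys M. ?e v) \<le> Poly_Mapping.lookup M u"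
      by (subst sum.delta) auto
    then show ?thesis using assms(3) M unfolding dle_def by fastforce
  qed
  ultimately show "dle u k (dconst (Poly_Mapping.lookup p M) * (\<Prod>v\<in>Poly_Mapping.keys M. \<sigma> v ^ Poly_Mapping.lookup M v))"
    using dle_mono[OF dle_mult[OF dle_dconst[of u "Poly_Mapping.lookup p M"]]] by simp
qed

definition cu :: "dvar \<Rightarrow> nat \<Rightarrow> 'a::comm_ring_1 dpoly \<Rightarrow> 'a dpoly" where
  "cu u l p = Abs_poly_mapping (\<lambda>N. if Poly_Mapping.lookup N u = 0 then Poly_Mapping.lookup p (N + Poly_Mapping.single u l) else 0)"

lemma lookup_cu: "Poly_Mapping.lookup (cu u l p) N = (if Poly_Mapping.lookup N u = 0 then Poly_Mapping.lookup p (N + Poly_Mapping.single u l) else 0)"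
proof -
  define g where "g = (\<lambda>N. if Poly_Mapping.lookup N u = 0 then Poly_Mapping.lookup p (N + Poly_Mapping.single u l) else 0)"
  have "{N. g N \<noteq> 0} \<subseteq> (\<lambda>M. M - Poly_Mapping.single u l) ` Poly_Mapping.keys p"
  proof
    fix N assume "N \<in> {N. g N \<noteq> 0}"
    then have k: "N + Poly_Mapping.single u l \<in> Poly_Mapping.keys p"
      unfolding g_def by (simp add: in_keys_iff split: if_splits)
    have "N = (N + Poly_Mapping.single u l) - Poly_Mapping.single u l" by simp
    then show "N \<in> (\<lambda>M. M - Poly_Mapping.single u l) ` Poly_Mapping.keys p"
      using k by (rule image_eqI)
  qed
  then have "finite {N. g N \<noteq> 0}"
    by (rule finite_subset) simp
  then have "Poly_Mapping.lookup (Abs_poly_mapping g) = g"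
    by (rule lookup_Abs_poly_mapping)
  then show ?thesis unfolding cu_def g_def[symmetric] by (simp add: g_def)
qed

lemma cu_add: "cu u l (p + q) = cu u l p + cu u l q"
  by (rule poly_mapping_eqI) (simp add: lookup_cu lookup_add)

lemma cu_low:
  assumes "0 < l" "dle u (l - 1) p" shows "cu u l p = 0"
proof (rule poly_mapping_eqI)
  fix N
  have "N + Poly_Mapping.single u l \<notin> Poly_Mapping.keys p"
    using assms by (auto simp: dle_def lookup_add)
  then show "Poly_Mapping.lookup (cu u l p) N = Poly_Mapping.lookup 0 N"
    by (simp add: lookup_cu in_keys_iff)
qed

lemma cu_shift:
  assumes "dle u 0 q"
  shows "cu u l (Poly_Mapping.single (Poly_Mapping.single u l) 1 * q) = q"
proof (rule poly_mapping_eqI)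
  fix N
  show "Poly_Mapping.lookup (cu u l (Poly_Mapping.single (Poly_Mapping.single u l) 1 * q)) N = Poly_Mapping.lookup q N"
  proof (cases "Poly_Mapping.lookup N u = 0")
    case True
    then show ?thesis by (simp add: lookup_cu add.commute[of N] lookup_single_mult)
  next
    case False
    then have "N \<notin> Poly_Mapping.keys q" using assms by (auto simp: dle_def)
    then show ?thesis using False by (simp add: lookup_cu in_keys_iff)
  qed
qed

lemma dle_cu: "dle u 0 (cu u l p)"
  by (auto simp: dle_def in_keys_iff lookup_cu split: if_splits)

lemma dvars_cu: "dvars (cu u l p) \<subseteq> dvars p"
proof
  fix v assume "v \<in> dvars (cu u l p)"
  then obtain N where N: "N \<in> Poly_Mapping.keys (cu u l p)" "v \<in> Poly_Mapping.keys N"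
    by (auto simp: dvars_def)
  then have "N + Poly_Mapping.single u l \<in> Poly_Mapping.keys p"
    by (auto simp: in_keys_iff lookup_cu split: if_splits)
  moreover have "v \<in> Poly_Mapping.keys (N + Poly_Mapping.single u l)"
    using N(2) by (simp add: in_keys_iff lookup_add)
  ultimately show "v \<in> dvars p" by (auto simp: dvars_def)
qed

lemma lead_coeff_in_cu: "lead_coeff_in u p = cu u (var_degree u p) p"
proof -
  define l where "l = var_degree u p"
  have eq: "(Poly_Mapping.lookup M u = l \<and> M - Poly_Mapping.single u l = N) \<longleftrightarrow>
            (Poly_Mapping.lookup N u = 0 \<and> M = N + Poly_Mapping.single u l)" for M N :: "dvar \<Rightarrow>\<^sub>0 nat"
  proof
    assume a: "Poly_Mapping.lookup M u = l \<and> M - Poly_Mapping.single u l = N"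
    then have "Poly_Mapping.lookup N u = 0" by (auto simp: lookup_minus)
    moreover have "M = N + Poly_Mapping.single u l"
      using a by (intro poly_mapping_eqI) (auto simp: lookup_minus lookup_add lookup_single when_def)
    ultimately show "Poly_Mapping.lookup N u = 0 \<and> M = N + Poly_Mapping.single u l" by simp
  next
    assume "Poly_Mapping.lookup N u = 0 \<and> M = N + Poly_Mapping.single u l"
    then show "Poly_Mapping.lookup M u = l \<and> M - Poly_Mapping.single u l = N"
      by (auto simp: lookup_add)
  qed
  show ?thesis
    unfolding lead_coeff_in_def Let_def l_def[symmetric]
  proof (rule poly_mapping_eqI)
    fix N
    have "Poly_Mapping.lookup (\<Sum>M\<in>{M \<in> Poly_Mapping.keys p. Poly_Mapping.lookup M u = l}. Poly_Mapping.single (M - Poly_Mapping.single u l) (Poly_Mapping.lookup p M)) N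
      = (\<Sum>M\<in>{M \<in> Poly_Mapping.keys p. Poly_Mapping.lookup M u = l}. (Poly_Mapping.lookup p M when M - Poly_Mapping.single u l = N))"
      by (simp add: lookup_sum lookup_single)
    also have "\<dots> = (\<Sum>M\<in>Poly_Mapping.keys p. (Poly_Mapping.lookup p M when Poly_Mapping.lookup M u = l \<and> M - Poly_Mapping.single u l = N))"
      by (simp add: sum.inter_filter[symmetric] when_def)
    also have "\<dots> = (\<Sum>M\<in>Poly_Mapping.keys p. (Poly_Mapping.lookup p M when Poly_Mapping.lookup N u = 0 \<and> M = N + Poly_Mapping.single u l))"
      by (simp only: eq)
    also have "\<dots> = Poly_Mapping.lookup (cu u l p) N"
      by (cases "Poly_Mapping.lookup N u = 0") (simp_all add: lookup_cu when_def sum.delta in_keys_iff)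
    finally show "Poly_Mapping.lookup (\<Sum>M\<in>{M \<in> Poly_Mapping.keys p. Poly_Mapping.lookup M u = l}. Poly_Mapping.single (M - Poly_Mapping.single u l) (Poly_Mapping.lookup p M)) N = Poly_Mapping.lookup (cu u l p) N" .
  qed
qed


lemma sub_add_single:
  fixes M :: "'x \<Rightarrow>\<^sub>0 nat"
  assumes "k \<le> Poly_Mapping.lookup M u"
  shows "M - Poly_Mapping.single u k + Poly_Mapping.single u k = M"
proof (rule poly_mapping_eqI)
  fix v show "Poly_Mapping.lookup (M - Poly_Mapping.single u k + Poly_Mapping.single u k) v = Poly_Mapping.lookup M v"
  proof (cases "v = u")
    case True
    then show ?thesis using assms by (simp add: lookup_add lookup_minus)
  next
    case False
    then show ?thesis by (simp add: lookup_add lookup_minus lookup_single)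
  qed
qed

lemma add_sub_single:
  fixes A B :: "'x \<Rightarrow>\<^sub>0 nat"
  assumes "k \<le> Poly_Mapping.lookup B u"
  shows "A + (B - Poly_Mapping.single u k) = A + B - Poly_Mapping.single u k"
proof (rule poly_mapping_eqI)
  fix v show "Poly_Mapping.lookup (A + (B - Poly_Mapping.single u k)) v = Poly_Mapping.lookup (A + B - Poly_Mapping.single u k) v"
  proof (cases "v = u")
    case True
    then show ?thesis using assms by (simp add: lookup_add lookup_minus)
  next
    case False
    then show ?thesis by (simp add: lookup_add lookup_minus lookup_single)
  qed
qed

lemma pd_single: "partial_diff u (Poly_Mapping.single M c) = Poly_Mapping.single (M - Poly_Mapping.single u 1) (of_nat (Poly_Mapping.lookup M u) * c)"
  by (cases "c = 0") (simp_all add: partial_diff_def)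

lemma lookup_pd: "Poly_Mapping.lookup (partial_diff u p) N = of_nat (Poly_Mapping.lookup N u + 1) * Poly_Mapping.lookup p (N + Poly_Mapping.single u 1)"
proof -
  have "Poly_Mapping.lookup (partial_diff u p) N = (\<Sum>M\<in>Poly_Mapping.keys p. (of_nat (Poly_Mapping.lookup M u) * Poly_Mapping.lookup p M when M - Poly_Mapping.single u 1 = N))"
    by (simp add: partial_diff_def lookup_sum lookup_single)
  also have "\<dots> = (\<Sum>M\<in>Poly_Mapping.keys p. (if M = N + Poly_Mapping.single u 1 then of_nat (Poly_Mapping.lookup M u) * Poly_Mapping.lookup p M else 0))"
  proof (rule sum.cong)
    fix M
    show "(of_nat (Poly_Mapping.lookup M u) * Poly_Mapping.lookup p M when M - Poly_Mapping.single u 1 = N)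
        = (if M = N + Poly_Mapping.single u 1 then of_nat (Poly_Mapping.lookup M u) * Poly_Mapping.lookup p M else 0)"
    proof (cases "Poly_Mapping.lookup M u = 0")
      case True
      have "M \<noteq> N + Poly_Mapping.single u 1" using True by (auto simp: lookup_add)
      then show ?thesis using True by (simp add: when_def)
    next
      case False
      then have "M - Poly_Mapping.single u 1 + Poly_Mapping.single u 1 = M"
        by (intro sub_add_single) simp
      then have "(M - Poly_Mapping.single u 1 = N) = (M = N + Poly_Mapping.single u 1)" by auto
      then show ?thesis by (simp add: when_def)
    qed
  qed simp
  also have "\<dots> = of_nat (Poly_Mapping.lookup N u + 1) * Poly_Mapping.lookup p (N + Poly_Mapping.single u 1)"
    by (simp add: sum.delta in_keys_iff lookup_add)
  finally show ?thesis .
qed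

lemma pd_add: "partial_diff u (p + q) = partial_diff u p + partial_diff u q"
  by (rule poly_mapping_eqI) (simp add: lookup_pd lookup_add distrib_left)

lemma pd_zero[simp]: "partial_diff u 0 = 0"
  by (simp add: partial_diff_def)

lemma pd_sum: "partial_diff u (\<Sum>i\<in>I. g i) = (\<Sum>i\<in>I. partial_diff u (g i))"
  by (induction I rule: infinite_finite_induct) (auto simp: pd_add)

lemma pd_free: assumes "dle u 0 p" shows "partial_diff u p = 0"
proof (rule poly_mapping_eqI)
  fix N
  have "N + Poly_Mapping.single u 1 \<notin> Poly_Mapping.keys p"
    using assms by (auto simp: dle_def lookup_add)
  then show "Poly_Mapping.lookup (partial_diff u p) N = Poly_Mapping.lookup 0 N"
    by (simp add: lookup_pd in_keys_iff)
qed

lemma pd_single_mult: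
  "partial_diff u (Poly_Mapping.single A a * Poly_Mapping.single B b) =
   Poly_Mapping.single A a * partial_diff u (Poly_Mapping.single B b) + partial_diff u (Poly_Mapping.single A a) * Poly_Mapping.single B b"
proof -
  let ?s = "Poly_Mapping.single u (1::nat)"
  have 1: "Poly_Mapping.single (A + (B - ?s)) (a * (of_nat (Poly_Mapping.lookup B u) * b))
         = Poly_Mapping.single (A + B - ?s) (of_nat (Poly_Mapping.lookup B u) * (a * b))"
  proof (cases "Poly_Mapping.lookup B u = 0")
    case False
    then show ?thesis by (simp add: add_sub_single ac_simps)
  qed simp
  have 2: "Poly_Mapping.single (A - ?s + B) (of_nat (Poly_Mapping.lookup A u) * a * b)
         = Poly_Mapping.single (A + B - ?s) (of_nat (Poly_Mapping.lookup A u) * (a * b))"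
  proof (cases "Poly_Mapping.lookup A u = 0")
    case False
    then show ?thesis using add_sub_single[of 1 A u B] by (simp add: ac_simps)
  qed simp
  have "Poly_Mapping.single A a * partial_diff u (Poly_Mapping.single B b) + partial_diff u (Poly_Mapping.single A a) * Poly_Mapping.single B b
     = Poly_Mapping.single (A + (B - ?s)) (a * (of_nat (Poly_Mapping.lookup B u) * b)) + Poly_Mapping.single (A - ?s + B) (of_nat (Poly_Mapping.lookup A u) * a * b)"
    by (simp only: mult_single pd_single)
  also have "\<dots> = Poly_Mapping.single (A + B - ?s) (of_nat (Poly_Mapping.lookup A u + Poly_Mapping.lookup B u) * (a * b))"
    by (simp only: 1 2 single_add[symmetric]) (simp add: algebra_simps)
  also have "\<dots> = partial_diff u (Poly_Mapping.single A a * Poly_Mapping.single B b)"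
    by (simp only: mult_single pd_single lookup_add)
  finally show ?thesis by simp
qed

lemma pd_mult: "partial_diff u (p * q) = p * partial_diff u q + partial_diff u p * q"
proof -
  let ?S = "\<lambda>p M. Poly_Mapping.single M (Poly_Mapping.lookup p M)"
  have P: "p = (\<Sum>M\<in>Poly_Mapping.keys p. ?S p M)" by (rule pm_expand)
  have Q: "q = (\<Sum>N\<in>Poly_Mapping.keys q. ?S q N)" by (rule pm_expand)
  have dP: "partial_diff u p = (\<Sum>M\<in>Poly_Mapping.keys p. partial_diff u (?S p M))"
    by (subst P) (simp only: pd_sum) 
  have dQ: "partial_diff u q = (\<Sum>N\<in>Poly_Mapping.keys q. partial_diff u (?S q N))"
    by (subst Q) (simp only: pd_sum)
  have "p * q = (\<Sum>M\<in>Poly_Mapping.keys p. ?S p M) * (\<Sum>N\<in>Poly_Mapping.keys q. ?S q N)"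
    using P Q by simp
  also have "\<dots> = (\<Sum>M\<in>Poly_Mapping.keys p. \<Sum>N\<in>Poly_Mapping.keys q. ?S p M * ?S q N)"
    by (simp add: sum_distrib_left sum_distrib_right sum.swap[of _ "Poly_Mapping.keys q"])
  finally have "partial_diff u (p * q) = (\<Sum>M\<in>Poly_Mapping.keys p. \<Sum>N\<in>Poly_Mapping.keys q.
       ?S p M * partial_diff u (?S q N) + partial_diff u (?S p M) * ?S q N)"
    by (simp add: pd_sum pd_single_mult)
  also have "\<dots> = (\<Sum>M\<in>Poly_Mapping.keys p. \<Sum>N\<in>Poly_Mapping.keys q. ?S p M * partial_diff u (?S q N))
      + (\<Sum>M\<in>Poly_Mapping.keys p. \<Sum>N\<in>Poly_Mapping.keys q. partial_diff u (?S p M) * ?S q N)"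
    by (simp add: sum.distrib)
  also have "(\<Sum>M\<in>Poly_Mapping.keys p. \<Sum>N\<in>Poly_Mapping.keys q. ?S p M * partial_diff u (?S q N))
      = (\<Sum>M\<in>Poly_Mapping.keys p. ?S p M) * (\<Sum>N\<in>Poly_Mapping.keys q. partial_diff u (?S q N))"
    by (simp add: sum_distrib_left sum_distrib_right sum.swap[of _ "Poly_Mapping.keys q"])
  also have "\<dots> = p * partial_diff u q" using P dQ by simp
  also have "(\<Sum>M\<in>Poly_Mapping.keys p. \<Sum>N\<in>Poly_Mapping.keys q. partial_diff u (?S p M) * ?S q N)
      = (\<Sum>M\<in>Poly_Mapping.keys p. partial_diff u (?S p M)) * (\<Sum>N\<in>Poly_Mapping.keys q. ?S q N)"
    by (simp add: sum_distrib_left sum_distrib_right sum.swap[of _ "Poly_Mapping.keys q"])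
  also have "\<dots> = partial_diff u p * q" using Q dP by simp
  finally show ?thesis .
qed

lemma pd_power: "partial_diff u (p ^ Suc e) = of_nat (Suc e) * p ^ e * partial_diff u p"
proof (induction e)
  case 0 then show ?case by simp
next
  case (Suc e)
  have "partial_diff u (p ^ Suc (Suc e)) = p * partial_diff u (p ^ Suc e) + partial_diff u p * p ^ Suc e"
    by (simp only: power_Suc[of p "Suc e"] pd_mult)
  also have "\<dots> = of_nat (Suc (Suc e)) * p ^ Suc e * partial_diff u p"
    using Suc by (simp add: algebra_simps)
  finally show ?case .
qed

lemma pd_dconst_mult: "partial_diff u (dconst c * X) = dconst c * partial_diff u X"
  by (simp add: pd_mult pd_free)

lemma pd_dX_self: "partial_diff u (dX u) = 1"
  by (simp add: dX_def pd_single)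

definition Qm :: "(dvar \<Rightarrow> 'a::comm_ring_1 dpoly) \<Rightarrow> dvar \<Rightarrow> (dvar \<Rightarrow>\<^sub>0 nat) \<Rightarrow> 'a dpoly" where
  "Qm \<sigma> u M = (\<Prod>v\<in>Poly_Mapping.keys M - {u}. \<sigma> v ^ Poly_Mapping.lookup M v)"

lemma mon_split: "mon \<sigma> M = \<sigma> u ^ Poly_Mapping.lookup M u * Qm \<sigma> u M"
proof (cases "u \<in> Poly_Mapping.keys M")
  case True
  then show ?thesis unfolding mon_def Qm_def by (simp add: prod.remove)
next
  case False
  then show ?thesis unfolding mon_def Qm_def by (simp add: in_keys_iff)
qed

lemma Qm_minus:
  "Qm \<sigma> u (M - Poly_Mapping.single u 1) = Qm \<sigma> u M"
proof -
  have k: "Poly_Mapping.keys (M - Poly_Mapping.single u 1) - {u} = Poly_Mapping.keys M - {u}"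
    by (auto simp: in_keys_iff lookup_minus lookup_single)
  show ?thesis unfolding Qm_def k
    by (rule prod.cong) (auto simp: lookup_minus lookup_single)
qed

lemma dconst_of_nat_mult: "dconst (of_nat k * c) = of_nat k * dconst c"
proof -
  have "(of_nat k :: 'a dpoly) * Poly_Mapping.single 0 c = Poly_Mapping.single 0 (of_nat k * c)"
    using mult_single[of 0 "of_nat k" 0 c] by simp
  then show ?thesis by (simp add: dconst_def)
qed

lemma chain:
  assumes vars: "\<And>v. v \<in> dvars p \<Longrightarrow> v \<noteq> u \<Longrightarrow> dle u 0 (\<sigma> v)"
    and su: "\<sigma> u = dX (T 0) * dX u + R" and R: "dle u 0 R" and uT: "u \<noteq> T 0"
  shows "partial_diff u (dsubst \<sigma> p) = dX (T 0) * dsubst \<sigma> (partial_diff u p)"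
proof -
  let ?t = "dX (T 0) :: 'a dpoly"
  have tfree: "dle u 0 ?t"
    using dle_single[of u "Poly_Mapping.single (T 0) 1" 1] uT by (simp add: dX_def lookup_single)
  have dsu: "partial_diff u (\<sigma> u) = ?t"
    by (simp add: su pd_add pd_mult pd_free[OF R] pd_free[OF tfree] pd_dX_self)
  have key: "partial_diff u (dconst c * mon \<sigma> M) = ?t * dsubst \<sigma> (partial_diff u (Poly_Mapping.single M c))"
    if M: "M \<in> Poly_Mapping.keys p" for M c
  proof -
    have "dle u (\<Sum>v\<in>Poly_Mapping.keys M - {u}. 0) (Qm \<sigma> u M)"
      unfolding Qm_def
    proof (rule dle_prod)
      fix v assume v: "v \<in> Poly_Mapping.keys M - {u}"
      then have "v \<in> dvars p" using M by (auto simp: dvars_def)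
      then show "dle u 0 (\<sigma> v ^ Poly_Mapping.lookup M v)"
        using dle_power[OF vars, of v "Poly_Mapping.lookup M v"] v by simp
    qed
    then have pQ: "partial_diff u (Qm \<sigma> u M) = 0" by (simp add: pd_free)
    show ?thesis
    proof (cases "Poly_Mapping.lookup M u")
      case 0
      then show ?thesis by (simp add: mon_split[of \<sigma> M u] pd_dconst_mult pQ pd_single)
    next
      case (Suc e)
      have lm: "Poly_Mapping.lookup (M - Poly_Mapping.single u 1) u = e"
        using Suc by (simp add: lookup_minus)
      have mM: "mon \<sigma> (M - Poly_Mapping.single u 1) = \<sigma> u ^ e * Qm \<sigma> u M"
        by (simp only: mon_split[of \<sigma> "M - Poly_Mapping.single u 1" u] lm Qm_minus)
      have "partial_diff u (dconst c * mon \<sigma> M) = dconst c * (of_nat (Suc e) * \<sigma> u ^ e * ?t * Qm \<sigma> u M)"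
        by (simp only: mon_split[of \<sigma> M u] Suc pd_dconst_mult pd_mult pQ pd_power dsu pd_free[OF dle_dconst]) simp
      also have "\<dots> = ?t * dsubst \<sigma> (partial_diff u (Poly_Mapping.single M c))"
        by (simp only: pd_single dsubst_single Suc dconst_of_nat_mult mM) (simp add: ac_simps)
      finally show ?thesis .
    qed
  qed
  have "partial_diff u (dsubst \<sigma> p) = (\<Sum>M\<in>Poly_Mapping.keys p. partial_diff u (dconst (Poly_Mapping.lookup p M) * mon \<sigma> M))"
    by (simp add: dsubst_def mon_def pd_sum)
  also have "\<dots> = (\<Sum>M\<in>Poly_Mapping.keys p. ?t * dsubst \<sigma> (partial_diff u (Poly_Mapping.single M (Poly_Mapping.lookup p M))))"
    by (rule sum.cong) (simp_all add: key)
  also have "\<dots> = ?t * dsubst \<sigma> (partial_diff u (\<Sum>M\<in>Poly_Mapping.keys p. Poly_Mapping.single M (Poly_Mapping.lookup p M)))"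
    by (simp add: pd_sum dsubst_sum sum_distrib_left)
  also have "\<dots> = ?t * dsubst \<sigma> (partial_diff u p)"
    by (simp only: pm_expand[symmetric])
  finally show ?thesis .
qed


lemma deriv_0: "is_derivation \<delta> \<Longrightarrow> \<delta> 0 = 0"
  unfolding is_derivation_def by (metis add_0 add_cancel_right_right)

lemma deriv_1: assumes "is_derivation \<delta>" shows "\<delta> 1 = 0"
proof -
  have "\<delta> (1 * 1) = 1 * \<delta> 1 + \<delta> 1 * 1" using assms unfolding is_derivation_def by blast
  then have "\<delta> 1 + \<delta> 1 = \<delta> 1" by simp
  then show ?thesis by (metis add_cancel_right_right add_cancel_left_right)
qed

lemma dderiv_add:
  assumes "is_derivation \<delta>"
  shows "dderiv \<delta> (p + q) = dderiv \<delta> p + dderiv \<delta> q"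
  unfolding dderiv_def
proof (rule setsum_keys_plus_distrib)
  fix M show "dderiv_mono \<delta> M 0 = 0" by (simp add: dderiv_mono_def deriv_0[OF assms])
next
  fix M a b
  show "dderiv_mono \<delta> M (a + b) = dderiv_mono \<delta> M a + dderiv_mono \<delta> M b"
    using assms unfolding dderiv_mono_def is_derivation_def
    by (simp add: single_add distrib_left sum.distrib algebra_simps)
qed

lemma dvars_add: "dvars (p + q) \<subseteq> dvars p \<union> dvars q"
  unfolding dvars_def using keys_add[of p q] by blast

lemma keys_nat_add: "Poly_Mapping.keys (A + B :: dvar \<Rightarrow>\<^sub>0 nat) = Poly_Mapping.keys A \<union> Poly_Mapping.keys B"
  by (auto simp: in_keys_iff lookup_add)

lemma dvars_mult: "dvars (p * q) \<subseteq> dvars p \<union> dvars q"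
proof
  fix v assume "v \<in> dvars (p * q)"
  then obtain M where M: "M \<in> Poly_Mapping.keys (p * q)" "v \<in> Poly_Mapping.keys M" by (auto simp: dvars_def)
  then obtain A B where "M = A + B" "A \<in> Poly_Mapping.keys p" "B \<in> Poly_Mapping.keys q"
    using keys_mult[of p q] by blast
  then show "v \<in> dvars p \<union> dvars q" using M(2) by (auto simp: dvars_def keys_nat_add)
qed

lemma dvars_dX: "dvars (dX v :: 'a::comm_ring_1 dpoly) = {v}"
  by (simp add: dvars_def dX_def)

lemma dvars_sum: "dvars (\<Sum>i\<in>I. g i) \<subseteq> (\<Union>i\<in>I. dvars (g i))"
  unfolding dvars_def using keys_sum[of g I] by blast

lemma dvars_single: "dvars (Poly_Mapping.single M c) \<subseteq> Poly_Mapping.keys M"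
  by (simp add: dvars_def)

lemma keys_dshift: "Poly_Mapping.keys (dshift v M) \<subseteq> Poly_Mapping.keys M \<union> {dsucc v}"
proof
  fix x assume "x \<in> Poly_Mapping.keys (dshift v M)"
  then have "Poly_Mapping.lookup M x - (1 when v = x) + (1 when dsucc v = x) \<noteq> 0"
    by (simp add: dshift_def in_keys_iff lookup_add lookup_minus lookup_single)
  then show "x \<in> Poly_Mapping.keys M \<union> {dsucc v}"
    by (cases "dsucc v = x") (auto simp: in_keys_iff when_def split: if_splits)
qed

lemma dvars_dderiv_mono: "dvars (dderiv_mono \<delta> M c) \<subseteq> Poly_Mapping.keys M \<union> dsucc ` Poly_Mapping.keys M"
proof -
  have A: "dvars (Poly_Mapping.single M (\<delta> c)) \<subseteq> Poly_Mapping.keys M" by (rule dvars_single)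
  have B: "dvars (\<Sum>v\<in>Poly_Mapping.keys M. Poly_Mapping.single (dshift v M) (of_nat (Poly_Mapping.lookup M v) * c))
     \<subseteq> (\<Union>v\<in>Poly_Mapping.keys M. dvars (Poly_Mapping.single (dshift v M) (of_nat (Poly_Mapping.lookup M v) * c)))"
    by (rule dvars_sum)
  have C: "dvars (Poly_Mapping.single (dshift v M) (of_nat (Poly_Mapping.lookup M v) * c)) \<subseteq> Poly_Mapping.keys M \<union> {dsucc v}" for v
    using dvars_single keys_dshift by (rule subset_trans)
  have "dvars (dderiv_mono \<delta> M c) \<subseteq> dvars (Poly_Mapping.single M (\<delta> c)) \<union> dvars (\<Sum>v\<in>Poly_Mapping.keys M. Poly_Mapping.single (dshift v M) (of_nat (Poly_Mapping.lookup M v) * c))"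
    unfolding dderiv_mono_def by (rule dvars_add)
  also have "\<dots> \<subseteq> Poly_Mapping.keys M \<union> dsucc ` Poly_Mapping.keys M"
    using A B C by blast
  finally show ?thesis .
qed

lemma dvars_dderiv: "dvars (dderiv \<delta> p) \<subseteq> dvars p \<union> dsucc ` dvars p"
proof -
  have "dvars (dderiv \<delta> p) \<subseteq> (\<Union>M\<in>Poly_Mapping.keys p. dvars (dderiv_mono \<delta> M (Poly_Mapping.lookup p M)))"
    unfolding dderiv_def by (rule dvars_sum)
  also have "\<dots> \<subseteq> (\<Union>M\<in>Poly_Mapping.keys p. Poly_Mapping.keys M \<union> dsucc ` Poly_Mapping.keys M)"
    using dvars_dderiv_mono by (rule UN_mono[OF order_refl])
  also have "\<dots> \<subseteq> dvars p \<union> dsucc ` dvars p"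
    unfolding dvars_def by blast
  finally show ?thesis .
qed

lemma dderiv_tY:
  assumes "is_derivation \<delta>"
  shows "dderiv \<delta> (dX (T 0) * dX (Y j k) :: 'a::field dpoly) = dX (T 1) * dX (Y j k) + dX (T 0) * dX (Y j (Suc k))"
proof -
  let ?M = "Poly_Mapping.single (T 0) 1 + Poly_Mapping.single (Y j k) (1::nat)"
  have p: "(dX (T 0) * dX (Y j k) :: 'a dpoly) = Poly_Mapping.single ?M 1"
    by (simp add: dX_def mult_single)
  have kM: "Poly_Mapping.keys ?M = {T 0, Y j k}"
    by (auto simp: in_keys_iff lookup_add lookup_single when_def split: if_splits)
  have s1: "dshift (T 0) ?M = Poly_Mapping.single (T 1) 1 + Poly_Mapping.single (Y j k) 1"
    by (rule poly_mapping_eqI) (simp add: dshift_def lookup_add lookup_minus lookup_single when_def)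
  have s2: "dshift (Y j k) ?M = Poly_Mapping.single (T 0) 1 + Poly_Mapping.single (Y j (Suc k)) 1"
    by (rule poly_mapping_eqI) (simp add: dshift_def lookup_add lookup_minus lookup_single when_def)
  have "dderiv \<delta> (Poly_Mapping.single ?M (1::'a)) = dderiv_mono \<delta> ?M 1"
    by (simp add: dderiv_def)
  also have "\<dots> = (\<Sum>v\<in>{T 0, Y j k}. Poly_Mapping.single (dshift v ?M) (of_nat (Poly_Mapping.lookup ?M v) * 1))"
    by (simp only: dderiv_mono_def kM deriv_1[OF assms] single_zero add_0)
  also have "\<dots> = Poly_Mapping.single (dshift (T 0) ?M) 1 + Poly_Mapping.single (dshift (Y j k) ?M) 1"
    by (simp add: lookup_add lookup_single)
  also have "\<dots> = dX (T 1) * dX (Y j k) + dX (T 0) * dX (Y j (Suc k))"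
    by (simp only: s1 s2) (simp add: dX_def mult_single)
  finally show ?thesis by (simp only: p)
qed

lemma tsubst_Y:
  assumes "is_derivation \<delta>"
  shows "\<exists>R. tsubst \<delta> (Y j k) = dX (T 0) * dX (Y j k) + R \<and> dvars (R :: 'a::field dpoly) \<subseteq> {T a | a. True} \<union> {Y j b | b. b < k}"
proof (induction k)
  case 0
  then show ?case by (intro exI[of _ 0]) (simp add: dvars_def)
next
  case (Suc k)
  then obtain R where R: "tsubst \<delta> (Y j k) = dX (T 0) * dX (Y j k) + R"
     "dvars (R :: 'a dpoly) \<subseteq> {T a | a. True} \<union> {Y j b | b. b < k}" by blast
  have "tsubst \<delta> (Y j (Suc k)) = dderiv \<delta> (tsubst \<delta> (Y j k))" by simp
  also have "\<dots> = dX (T 0) * dX (Y j (Suc k)) + (dX (T 1) * dX (Y j k) + dderiv \<delta> R)"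
    by (simp only: R dderiv_add[OF assms] dderiv_tY[OF assms]) (simp add: add_ac)
  finally have e: "tsubst \<delta> (Y j (Suc k)) = dX (T 0) * dX (Y j (Suc k)) + (dX (T 1) * dX (Y j k) + dderiv \<delta> R)" .
  have d1: "dvars (dX (T 1) * dX (Y j k) :: 'a dpoly) \<subseteq> {T 1, Y j k}"
    using dvars_mult[of "dX (T 1) :: 'a dpoly" "dX (Y j k)"] by (simp add: dvars_dX insert_commute)
  have d2: "dsucc ` dvars R \<subseteq> {T a | a. True} \<union> {Y j b | b. b < Suc k}"
  proof
    fix x assume "x \<in> dsucc ` dvars R"
    then obtain y where y: "y \<in> dvars R" "x = dsucc y" by (rule imageE)
    have "y \<in> {T a | a. True} \<union> {Y j b | b. b < k}" using R(2) y(1) by (rule subsetD)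
    then show "x \<in> {T a | a. True} \<union> {Y j b | b. b < Suc k}"
      unfolding y(2) by (elim UnE CollectE exE conjE) auto
  qed
  have d3: "dvars R \<subseteq> {T a | a. True} \<union> {Y j b | b. b < Suc k}"
    using R(2) by (auto simp: less_Suc_eq)
  have d4: "{T 1, Y j k} \<subseteq> {T a | a. True} \<union> {Y j b | b. b < Suc k}" by auto
  have "dvars (dX (T 1) * dX (Y j k) + dderiv \<delta> R :: 'a dpoly) \<subseteq> dvars (dX (T 1) * dX (Y j k) :: 'a dpoly) \<union> dvars (dderiv \<delta> R)"
    by (rule dvars_add)
  also have "\<dots> \<subseteq> {T a | a. True} \<union> {Y j b | b. b < Suc k}"
  proof (rule Un_least)
    show "dvars (dX (T 1) * dX (Y j k) :: 'a dpoly) \<subseteq> {T a | a. True} \<union> {Y j b | b. b < Suc k}"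
      using d1 d4 by (rule subset_trans)
    have "dvars R \<union> dsucc ` dvars R \<subseteq> {T a | a. True} \<union> {Y j b | b. b < Suc k}"
      using d3 d2 by (rule Un_least)
    then show "dvars (dderiv \<delta> R) \<subseteq> {T a | a. True} \<union> {Y j b | b. b < Suc k}"
      using dvars_dderiv[of \<delta> R] by (rule subset_trans[rotated])
  qed
  finally show ?case using e by blast
qed

lemma dvars_tsubst_Y:
  assumes "is_derivation \<delta>"
  shows "dvars (tsubst \<delta> (Y j k) :: 'a::field dpoly) \<subseteq> {T a | a. True} \<union> {Y j b | b. b \<le> k}"
proof -
  from tsubst_Y[OF assms, of j k] obtain R where R0: "tsubst \<delta> (Y j k) = dX (T 0) * dX (Y j k) + R
     \<and> dvars (R :: 'a dpoly) \<subseteq> {T a | a. True} \<union> {Y j b | b. b < k}" ..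
  note R = conjunct1[OF R0] conjunct2[OF R0]
  have d1: "dvars (dX (T 0) * dX (Y j k) :: 'a dpoly) \<subseteq> {T 0, Y j k}"
    using dvars_mult[of "dX (T 0) :: 'a dpoly" "dX (Y j k)"] by (simp add: dvars_dX insert_commute)
  have d3: "dvars R \<subseteq> {T a | a. True} \<union> {Y j b | b. b \<le> k}"
  proof -
    have "{Y j b | b. b < k} \<subseteq> {Y j b | b. b \<le> k}" by (auto intro: less_imp_le)
    then show ?thesis using R(2) by blast
  qed
  have d4: "{T 0, Y j k} \<subseteq> {T a | a. True} \<union> {Y j b | b. b \<le> k}" by auto
  have "dvars (tsubst \<delta> (Y j k) :: 'a dpoly) \<subseteq> dvars (dX (T 0) * dX (Y j k) :: 'a dpoly) \<union> dvars R"
    unfolding R(1) by (rule dvars_add)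
  also have "\<dots> \<subseteq> {T a | a. True} \<union> {Y j b | b. b \<le> k}"
    using subset_trans[OF d1 d4] d3 by (rule Un_least)
  finally show ?thesis .
qed


definition Dn :: "nat \<Rightarrow> dvar set" where "Dn n = {Y j k | j k. j \<le> n}"

lemma rk_irr: "is_ranking n r \<Longrightarrow> u \<in> Dn n \<Longrightarrow> \<not> r u u"
  unfolding is_ranking_def Let_def Dn_def[symmetric] by blast
lemma rk_trans: "is_ranking n r \<Longrightarrow> u \<in> Dn n \<Longrightarrow> v \<in> Dn n \<Longrightarrow> w \<in> Dn n \<Longrightarrow> r u v \<Longrightarrow> r v w \<Longrightarrow> r u w"
  unfolding is_ranking_def Let_def Dn_def[symmetric] by blast
lemma rk_total: "is_ranking n r \<Longrightarrow> u \<in> Dn n \<Longrightarrow> v \<in> Dn n \<Longrightarrow> u \<noteq> v \<Longrightarrow> r u v \<or> r v u"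
  unfolding is_ranking_def Let_def Dn_def[symmetric] by blast
lemma rk_succ: "is_ranking n r \<Longrightarrow> u \<in> Dn n \<Longrightarrow> r u (dsucc u)"
  unfolding is_ranking_def Let_def Dn_def[symmetric] by blast

lemma Y_in_Dn: "i \<le> n \<Longrightarrow> Y i k \<in> Dn n" by (auto simp: Dn_def)

lemma rk_chain:
  assumes "is_ranking n r" "i \<le> n"
  shows "r (Y i b) (Y i (b + Suc d))"
proof (induction d)
  case 0
  show ?case using rk_succ[OF assms(1) Y_in_Dn[OF assms(2), of b]] by simp
next
  case (Suc d)
  have "r (Y i (b + Suc d)) (Y i (b + Suc (Suc d)))"
    using rk_succ[OF assms(1) Y_in_Dn[OF assms(2), of "b + Suc d"]] by simp
  then show ?case
    using rk_trans[OF assms(1) Y_in_Dn[OF assms(2)] Y_in_Dn[OF assms(2)] Y_in_Dn[OF assms(2)] Suc] by simp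
qed

lemma leader_ex:
  assumes rk: "is_ranking n r" and "finite S" "S \<noteq> {}" "S \<subseteq> Dn n"
  shows "\<exists>u\<in>S. \<forall>v\<in>S. v \<noteq> u \<longrightarrow> r v u"
  using assms(2,3,4)
proof (induction S rule: finite_ne_induct)
  case (singleton x) then show ?case by simp
next
  case (insert x F)
  then obtain m where m: "m \<in> F" "\<forall>v\<in>F. v \<noteq> m \<longrightarrow> r v m" by auto
  have xD: "x \<in> Dn n" and FD: "F \<subseteq> Dn n" using insert.prems by auto
  have mD: "m \<in> Dn n" using m(1) FD by auto
  show ?case
  proof (cases "r m x")
    case True
    have "\<forall>v\<in>insert x F. v \<noteq> x \<longrightarrow> r v x"
    proof (intro ballI impI)
      fix v assume v: "v \<in> insert x F" "v \<noteq> x"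
      then have vF: "v \<in> F" by simp
      show "r v x"
      proof (cases "v = m")
        case True then show ?thesis using \<open>r m x\<close> by simp
      next
        case False
        then have "r v m" using m vF by auto
        then show ?thesis using rk_trans[OF rk _ mD xD _ \<open>r m x\<close>] vF FD by auto
      qed
    qed
    then show ?thesis by auto
  next
    case False
    have "x \<noteq> m" using insert.hyps m(1) by auto
    then have "r x m" using rk_total[OF rk xD mD] False by auto
    then have "\<forall>v\<in>insert x F. v \<noteq> m \<longrightarrow> r v m" using m by auto
    then show ?thesis using m(1) by auto
  qed
qed

lemma finite_dvars: "finite (dvars p)"
  by (simp add: dvars_def)

lemma leader_prop:
  assumes rk: "is_ranking n r" and "dvars p \<noteq> {}" "dvars p \<subseteq> Dn n"
  shows "leader r p \<in> dvars p \<and> (\<forall>v\<in>dvars p. v \<noteq> leader r p \<longrightarrow> r v (leader r p))"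
proof -
  have ex: "\<exists>u. u \<in> dvars p \<and> (\<forall>v\<in>dvars p. v \<noteq> u \<longrightarrow> r v u)"
    using leader_ex[OF rk finite_dvars assms(2,3)] by blast
  have uniq: "u1 = u2" if "u1 \<in> dvars p \<and> (\<forall>v\<in>dvars p. v \<noteq> u1 \<longrightarrow> r v u1)"
     "u2 \<in> dvars p \<and> (\<forall>v\<in>dvars p. v \<noteq> u2 \<longrightarrow> r v u2)" for u1 u2
  proof (rule ccontr)
    assume ne: "u1 \<noteq> u2"
    have D: "u1 \<in> Dn n" "u2 \<in> Dn n" using that assms(3) by auto
    have "r u1 u2" "r u2 u1" using that ne by auto
    then have "r u1 u1" using rk_trans[OF rk D(1) D(2) D(1)] by simp
    then show False using rk_irr[OF rk D(1)] by simp
  qed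
  have "\<exists>!u. u \<in> dvars p \<and> (\<forall>v\<in>dvars p. v \<noteq> u \<longrightarrow> r v u)"
    using ex uniq by blast
  then show ?thesis unfolding leader_def by (rule theI')
qed

lemma single_mult_inj:
  fixes P Q :: "'a::comm_ring_1 dpoly"
  assumes "Poly_Mapping.single K 1 * P = Poly_Mapping.single K 1 * Q"
  shows "P = Q"
proof (rule poly_mapping_eqI)
  fix N
  have "Poly_Mapping.lookup (Poly_Mapping.single K 1 * P) (K + N) = Poly_Mapping.lookup (Poly_Mapping.single K 1 * Q) (K + N)"
    using assms by simp
  then show "Poly_Mapping.lookup P N = Poly_Mapping.lookup Q N"
    by (simp add: lookup_single_mult)
qed

lemma tcancel:
  fixes P I :: "'a::comm_ring_1 dpoly"
  assumes I0: "dle (T 0) 0 I" and Inz: "I \<noteq> 0" and eq: "dX (T 0) ^ a * P = dX (T 0) ^ b * I"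
  shows "\<exists>d. P = dX (T 0) ^ d * I"
proof (cases "a \<le> b")
  case True
  have pb: "(dX (T 0) :: 'a dpoly) ^ b = dX (T 0) ^ a * dX (T 0) ^ (b - a)"
    using True by (metis le_add_diff_inverse power_add)
  have "dX (T 0) ^ a * P = dX (T 0) ^ a * (dX (T 0) ^ (b - a) * I)"
    using eq unfolding pb by (simp only: mult.assoc)
  then have "Poly_Mapping.single (Poly_Mapping.single (T 0) a) 1 * P = Poly_Mapping.single (Poly_Mapping.single (T 0) a) 1 * (dX (T 0) ^ (b - a) * I)"
    by (simp only: dX_power)
  then have "P = dX (T 0) ^ (b - a) * I"
    by (rule single_mult_inj)
  then show ?thesis by blast
next
  case False
  have pa: "(dX (T 0) :: 'a dpoly) ^ a = dX (T 0) ^ b * dX (T 0) ^ (a - b)"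
    using False by (metis le_add_diff_inverse nat_le_linear power_add)
  have "dX (T 0) ^ b * (dX (T 0) ^ (a - b) * P) = dX (T 0) ^ b * I"
    using eq unfolding pa by (simp only: mult.assoc)
  then have "Poly_Mapping.single (Poly_Mapping.single (T 0) b) 1 * (dX (T 0) ^ (a - b) * P) = Poly_Mapping.single (Poly_Mapping.single (T 0) b) 1 * I"
    by (simp only: dX_power)
  then have "dX (T 0) ^ (a - b) * P = I"
    by (rule single_mult_inj)
  then have II: "I = Poly_Mapping.single (Poly_Mapping.single (T 0) (a - b)) 1 * P"
    by (simp only: dX_power)
  have "Poly_Mapping.keys I \<noteq> {}" using Inz by simp
  then obtain M where M: "M \<in> Poly_Mapping.keys I" by blast
  have "M \<in> {x + y | x y. x \<in> Poly_Mapping.keys (Poly_Mapping.single (Poly_Mapping.single (T 0) (a - b)) (1::'a)) \<and> y \<in> Poly_Mapping.keys P}"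
    using keys_mult M unfolding II by (rule subsetD)
  then obtain N where "M = Poly_Mapping.single (T 0) (a - b) + N"
    by auto
  then have "Poly_Mapping.lookup M (T 0) \<ge> a - b" by (simp add: lookup_add)
  moreover have "Poly_Mapping.lookup M (T 0) \<le> 0" using I0 M by (simp add: dle_def)
  ultimately show ?thesis using False by simp
qed

lemma dvars_pd: "dvars (partial_diff u p) \<subseteq> dvars p"
proof
  fix v assume "v \<in> dvars (partial_diff u p)"
  then obtain N where N: "N \<in> Poly_Mapping.keys (partial_diff u p)" "v \<in> Poly_Mapping.keys N"
    by (auto simp: dvars_def)
  then have "N + Poly_Mapping.single u 1 \<in> Poly_Mapping.keys p"
    by (auto simp: in_keys_iff lookup_pd)
  moreover have "v \<in> Poly_Mapping.keys (N + Poly_Mapping.single u 1)"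
    using N(2) by (simp add: in_keys_iff lookup_add)
  ultimately show "v \<in> dvars p" by (auto simp: dvars_def)
qed


lemma dle_dX_self: "dle u 1 (dX u :: 'a::comm_ring_1 dpoly)"
  using dle_single[of u "Poly_Mapping.single u 1" "1::'a"] by (simp add: dX_def)

lemma dle_dX_other: "v \<noteq> u \<Longrightarrow> dle u 0 (dX v :: 'a::comm_ring_1 dpoly)"
  using dle_single[of u "Poly_Mapping.single v 1" "1::'a"] by (simp add: dX_def lookup_single)

lemma binom_lead:
  fixes t R :: "'a::comm_ring_1 dpoly"
  assumes t: "dle u 0 t" and R: "dle u 0 R"
  shows "\<exists>E. dle u l E \<and> (t * dX u + R) ^ Suc l = dX u ^ Suc l * t ^ Suc l + E"
proof (induction l)
  case 0
  show ?case using R by (intro exI[of _ R]) (simp add: ac_simps)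
next
  case (Suc l)
  then obtain E where E: "dle u l E" "(t * dX u + R) ^ Suc l = dX u ^ Suc l * t ^ Suc l + E" by blast
  define E' where "E' = dX u ^ Suc l * t ^ Suc l * R + E * (t * dX u) + E * R"
  have "(t * dX u + R) ^ Suc (Suc l) = (dX u ^ Suc l * t ^ Suc l + E) * (t * dX u + R)"
    using power_Suc2[of "t * dX u + R" "Suc l"] E(2) by simp
  also have "\<dots> = dX u ^ Suc (Suc l) * t ^ Suc (Suc l) + E'"
    unfolding E'_def by (simp add: algebra_simps)
  finally have eq: "(t * dX u + R) ^ Suc (Suc l) = dX u ^ Suc (Suc l) * t ^ Suc (Suc l) + E'" .
  have d1: "dle u (Suc l) (dX u ^ Suc l * t ^ Suc l * R)"
    using dle_mult[OF dle_mult[OF dle_power[OF dle_dX_self, where k="Suc l"] dle_power[OF t, where k="Suc l"]] R] by (simp del: power_Suc)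
  have d2: "dle u (Suc l) (E * (t * dX u))"
    using dle_mult[OF E(1) dle_mult[OF t dle_dX_self]] by simp
  have d3: "dle u (Suc l) (E * R)"
    using dle_mono[OF dle_mult[OF E(1) R]] by simp
  have "dle u (Suc l) E'" unfolding E'_def by (intro dle_add d1 d2 d3)
  then show ?case using eq by blast
qed

theorem mainTheorem1:
  fixes \<delta> :: "'a::field \<Rightarrow> 'a" and f :: "'a dpoly" and n m :: nat
    and r :: "dvar \<Rightarrow> dvar \<Rightarrow> bool"
  assumes "is_derivation \<delta>"
    and "in_Fy n f"
    and "f \<noteq> 0"
    and "dvars f \<noteq> {}"
    and "diff_homogeneous \<delta> f m"
    and "is_ranking n r"
  shows "(\<exists>d. diff_homogeneous \<delta> (initial r f) d) \<and> (\<exists>e. diff_homogeneous \<delta> (separant r f) e)"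
proof -
  note der = assms(1) and Fy = assms(2) and fnz = assms(3) and dv = assms(4) and hom = assms(5) and rk = assms(6)
  define \<sigma> where "\<sigma> = tsubst \<delta>"
  define t where "t = (dX (T 0) :: 'a dpoly)"
  define u where "u = leader r f"
  have fD: "dvars f \<subseteq> Dn n"
    using Fy unfolding in_Fy_def Dn_def by auto
  have lp: "u \<in> dvars f \<and> (\<forall>v\<in>dvars f. v \<noteq> u \<longrightarrow> r v u)"
    unfolding u_def by (rule leader_prop[OF rk dv fD])
  have uf: "u \<in> dvars f" and umax: "\<And>v. v \<in> dvars f \<Longrightarrow> v \<noteq> u \<Longrightarrow> r v u"
    using lp by auto
  obtain i b where ui: "u = Y i b" "i \<le> n" using Fy uf unfolding in_Fy_def by blast
  have uT: "u \<noteq> T 0" using ui by simp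
  have T0f: "T 0 \<notin> dvars f" using Fy unfolding in_Fy_def by auto
  have tfree: "dle u 0 t" unfolding t_def using uT by (intro dle_dX_other) simp
  have tpow: "dle u 0 (t ^ k)" for k using dle_power[OF tfree, of k] by simp
  have vars: "dle u 0 (\<sigma> v)" if v: "v \<in> dvars f" "v \<noteq> u" for v
  proof -
    obtain j k where vj: "v = Y j k" "j \<le> n" using Fy v(1) unfolding in_Fy_def by blast
    have "u \<notin> dvars (\<sigma> v)"
    proof
      assume uin: "u \<in> dvars (\<sigma> v)"
      have "u \<in> {T a | a. True} \<union> {Y j c | c. c \<le> k}"
        using dvars_tsubst_Y[OF der, of j k] uin unfolding \<sigma>_def vj(1) by (rule subsetD)
      then have ij: "i = j" and bk: "b \<le> k" using ui(1) by auto
      have "b \<noteq> k" using v(2) vj(1) ui(1) ij by auto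
      then have "b < k" using bk by simp
      then obtain d where kd: "k = b + Suc d" using less_imp_Suc_add by fastforce
      have "r u v" using rk_chain[OF rk ui(2), of b d] ui(1) vj(1) ij kd by simp
      moreover have "r v u" using umax v by simp
      moreover have "u \<in> Dn n" "v \<in> Dn n" using uf v(1) fD by auto
      ultimately have "r u u" using rk_trans[OF rk] by blast
      then show False using rk_irr[OF rk \<open>u \<in> Dn n\<close>] by simp
    qed
    then show "dle u 0 (\<sigma> v)" by (rule dle_novar)
  qed
  from tsubst_Y[OF der, of i b] obtain R where R0: "tsubst \<delta> (Y i b) = dX (T 0) * dX (Y i b) + R
     \<and> dvars (R :: 'a dpoly) \<subseteq> {T a | a. True} \<union> {Y i c | c. c < b}" ..
  have su: "\<sigma> u = t * dX u + R" using R0 unfolding \<sigma>_def t_def ui(1) by simp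
  have "u \<notin> dvars R"
  proof
    assume "u \<in> dvars R"
    then have "u \<in> {T a | a. True} \<union> {Y i c | c. c < b}" using R0 by blast
    then show False using ui(1) by auto
  qed
  then have Rfree: "dle u 0 R" by (rule dle_novar)
  have su1: "dle u 1 (\<sigma> u)"
    unfolding su using dle_add[OF dle_mult[OF tfree dle_dX_self] dle_mono[OF Rfree]] by simp
  have dsub: "dle u k (dsubst \<sigma> p)" if "dvars p \<subseteq> dvars f" "dle u k p" for p k
    using that vars su1 by (intro dle_dsubst) auto
  have homf: "dsubst \<sigma> f = t ^ m * f"
    using hom unfolding diff_homogeneous_def \<sigma>_def t_def .
  have suT: "\<sigma> u = dX (T 0) * dX u + R" using su unfolding t_def .

  have sep: "\<exists>e. diff_homogeneous \<delta> (separant r f) e"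
  proof -
    let ?S = "partial_diff u f"
    have sepd: "separant r f = ?S" unfolding separant_def u_def ..
    have "partial_diff u (dsubst \<sigma> f) = t * dsubst \<sigma> ?S"
      unfolding t_def by (rule chain[where p=f and \<sigma>=\<sigma> and u=u, OF vars suT Rfree uT])
    moreover have "partial_diff u (dsubst \<sigma> f) = t ^ m * ?S"
      unfolding homf by (simp add: pd_mult pd_free[OF tpow])
    ultimately have eq: "t ^ 1 * dsubst \<sigma> ?S = t ^ m * ?S" by simp
    show ?thesis
    proof (cases "?S = 0")
      case True
      then show ?thesis unfolding sepd diff_homogeneous_def by simp
    next
      case False
      have "T 0 \<notin> dvars ?S" using dvars_pd[of u f] T0f by blast
      then have "dle (T 0) 0 ?S" by (rule dle_novar)
      from tcancel[OF this False eq[unfolded t_def]] obtain d where "dsubst \<sigma> ?S = dX (T 0) ^ d * ?S"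
        by blast
      then show ?thesis unfolding sepd diff_homogeneous_def \<sigma>_def by blast
    qed
  qed

  define l where "l = var_degree u f"
  define I where "I = cu u l f"
  have initd: "initial r f = I" unfolding initial_def I_def l_def u_def lead_coeff_in_cu ..
  have kf: "Poly_Mapping.keys f \<noteq> {}" using fnz by simp
  have finimg: "finite ((\<lambda>M. Poly_Mapping.lookup M u) ` Poly_Mapping.keys f)" by simp
  have lmax: "Poly_Mapping.lookup M u \<le> l" if "M \<in> Poly_Mapping.keys f" for M
    unfolding l_def var_degree_def using that finimg by (intro Max_ge) auto
  have "l \<in> (\<lambda>M. Poly_Mapping.lookup M u) ` Poly_Mapping.keys f"
    unfolding l_def var_degree_def using finimg kf by (intro Max_in) auto
  then obtain M0 where M0: "M0 \<in> Poly_Mapping.keys f" "Poly_Mapping.lookup M0 u = l" by auto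
  obtain M1 where M1: "M1 \<in> Poly_Mapping.keys f" "u \<in> Poly_Mapping.keys M1"
    using uf unfolding dvars_def by auto
  have lpos: "0 < l" using lmax[OF M1(1)] M1(2) by (auto simp: in_keys_iff)
  have I0u: "dle u 0 I" by (simp add: I_def dle_cu)
  have dvI: "dvars I \<subseteq> dvars f" by (simp add: I_def dvars_cu)
  have Inz: "I \<noteq> 0"
  proof
    assume "I = 0"
    then have "Poly_Mapping.lookup I (M0 - Poly_Mapping.single u l) = 0" by simp
    moreover have "Poly_Mapping.lookup I (M0 - Poly_Mapping.single u l) = Poly_Mapping.lookup f M0"
      using M0(2) sub_add_single[of l M0 u] by (simp add: I_def lookup_cu lookup_minus)
    ultimately show False using M0(1) by (simp add: in_keys_iff)
  qed
  define X where "X = dX u ^ l * I"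
  have lookX: "Poly_Mapping.lookup X M = (if Poly_Mapping.lookup M u = l then Poly_Mapping.lookup f M else 0)" for M
  proof (cases "l \<le> Poly_Mapping.lookup M u")
    case True
    define N where "N = M - Poly_Mapping.single u l"
    have MN: "M = Poly_Mapping.single u l + N"
      using sub_add_single[OF True] by (simp add: N_def add.commute)
    have Nu: "Poly_Mapping.lookup N u = Poly_Mapping.lookup M u - l" by (simp add: N_def lookup_minus)
    have "Poly_Mapping.lookup X M = Poly_Mapping.lookup I N"
      unfolding X_def dX_power MN by (simp add: lookup_single_mult)
    also have "\<dots> = (if Poly_Mapping.lookup M u = l then Poly_Mapping.lookup f M else 0)"
      using True Nu MN by (auto simp: I_def lookup_cu add.commute)
    finally show ?thesis .
  next
    case False
    have "\<not> (\<exists>N. M = Poly_Mapping.single u l + N)"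
    proof
      assume "\<exists>N. M = Poly_Mapping.single u l + N"
      then obtain N where "M = Poly_Mapping.single u l + N" by blast
      then have "Poly_Mapping.lookup M u \<ge> l" by (simp add: lookup_add)
      then show False using False by simp
    qed
    then have "Poly_Mapping.lookup X M = 0"
      unfolding X_def dX_power by (rule lookup_single_mult0)
    then show ?thesis using False by simp
  qed
  define g where "g = f - X"
  have fXg: "f = X + g" by (simp add: g_def)
  have lookg: "Poly_Mapping.lookup g M = (if Poly_Mapping.lookup M u = l then 0 else Poly_Mapping.lookup f M)" for M
    by (simp add: g_def lookup_minus lookX)
  have kg: "Poly_Mapping.keys g \<subseteq> Poly_Mapping.keys f"
    by (auto simp: in_keys_iff lookg split: if_splits)
  have gdeg: "dle u (l - 1) g"
    unfolding dle_def
  proof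
    fix M assume M: "M \<in> Poly_Mapping.keys g"
    then have "Poly_Mapping.lookup M u \<noteq> l" by (auto simp: in_keys_iff lookg split: if_splits)
    moreover have "Poly_Mapping.lookup M u \<le> l" using M kg lmax by auto
    ultimately show "Poly_Mapping.lookup M u \<le> l - 1" by simp
  qed
  have dvg: "dvars g \<subseteq> dvars f" using kg unfolding dvars_def by auto
  obtain E where E: "dle u (l - 1) E" "(t * dX u + R) ^ l = dX u ^ l * t ^ l + E"
    using binom_lead[OF tfree Rfree, of "l - 1"] lpos by auto
  have phiI0: "dle u 0 (dsubst \<sigma> I)" by (rule dsub[OF dvI I0u])
  have eq1: "dsubst \<sigma> f = dX u ^ l * (t ^ l * dsubst \<sigma> I) + (E * dsubst \<sigma> I + dsubst \<sigma> g)"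
  proof -
    have "dsubst \<sigma> f = (t * dX u + R) ^ l * dsubst \<sigma> I + dsubst \<sigma> g"
      unfolding fXg X_def by (simp add: dsubst_add dsubst_mult dsubst_power su)
    then show ?thesis unfolding E(2) by (simp add: algebra_simps)
  qed
  have c1: "cu u l (dsubst \<sigma> f) = t ^ l * dsubst \<sigma> I"
  proof -
    have a: "dle u 0 (t ^ l * dsubst \<sigma> I)"
      using dle_mult[OF tpow phiI0] by simp
    have b1: "dle u (l - 1) (E * dsubst \<sigma> I)"
      using dle_mult[OF E(1) phiI0] by simp
    have b: "dle u (l - 1) (E * dsubst \<sigma> I + dsubst \<sigma> g)"
      by (rule dle_add[OF b1 dsub[OF dvg gdeg]])
    have "cu u l (dsubst \<sigma> f) = cu u l (dX u ^ l * (t ^ l * dsubst \<sigma> I)) + cu u l (E * dsubst \<sigma> I + dsubst \<sigma> g)"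
      unfolding eq1 by (rule cu_add)
    also have "\<dots> = t ^ l * dsubst \<sigma> I + 0"
      unfolding dX_power cu_shift[OF a] cu_low[OF lpos b] ..
    finally show ?thesis by simp
  qed
  have eq2: "t ^ m * f = dX u ^ l * (t ^ m * I) + t ^ m * g"
    unfolding fXg X_def by (simp add: algebra_simps)
  have c2: "cu u l (t ^ m * f) = t ^ m * I"
  proof -
    have a: "dle u 0 (t ^ m * I)"
      using dle_mult[OF tpow I0u] by simp
    have b: "dle u (l - 1) (t ^ m * g)"
      using dle_mult[OF tpow gdeg] by simp
    show ?thesis
      unfolding eq2 cu_add dX_power cu_shift[OF a] cu_low[OF lpos b] by simp
  qed
  have eqI: "dX (T 0) ^ l * dsubst \<sigma> I = dX (T 0) ^ m * I"
    using c1 c2 homf unfolding t_def by simp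
  have "T 0 \<notin> dvars I" using dvI T0f by blast
  then have "dle (T 0) 0 I" by (rule dle_novar)
  from tcancel[OF this Inz eqI] obtain d where "dsubst \<sigma> I = dX (T 0) ^ d * I" by blast
  then have "diff_homogeneous \<delta> (initial r f) d"
    unfolding initd diff_homogeneous_def \<sigma>_def .
  then show ?thesis using sep by blast
qed


end
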